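(* Let $0\le r\le q^2$. If there exists a line spread $\mathcal F$ of $\mathrm{PG}(3,q)$ having exactly $r$ lines in common with the Desarguesian spread $\mathcal D$, then $\mathrm{PG}(3,q)$ admits a mixed partition of type $r$.
   Context: Let $q$ be a prime power, $F=\mathbb F_q$, $L=\mathbb F_{q^4}$, regarded as a 4-dimensional $F$-vector space; $\mathrm{PG}(3,q)$ has as points the one-dimensional subspaces $Fx$, $x\in L^*$, and as lines the two-dimensional $F$-subspaces (identified with their point sets). Let $C$ be the subfield of $L$ of order $q^2$ and $\mathcal D=\{Cx:x\in L^*\}$ the Desarguesian line spread. A line spread is a set of lines partitioning the point set. For $r\ge1$, a set $X$ of points of a projective space $\mathrm{PG}(V)$ over $F$ is the image of an $r$-uple embedding if there is an injective $F$-linear map $\phi:F^{r+1}\to V$ with $X=\{F\phi(t_0^r,t_0^{r-1}t_1,\dots,t_1^r):(t_0,t_1)\in F^2\setminus\{(0,0)\}\}$. A mixed partition of type $r$ of $\mathrm{PG}(3,q)$ ($0\le r\le q^2$) is a partition of its point set into $r$ lines and $q^2+1-r$ sets each of which is the image of a $3$-uple embedding (normal rational curves of order three, i.e. twisted cubics, when $q\ge3$). *)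

theory Defs
  imports "HOL-Computational_Algebra.Primes"
begin

text \<open>Ambient field L = GF(q^4) is a finite field type 'a with CARD('a) = q^4.
  Its subfield of order q^k is the set of roots of x^(q^k) = x.\<close>

definition prime_power :: "nat \<Rightarrow> bool" where
  "prime_power q \<longleftrightarrow> (\<exists>p k. prime p \<and> k \<ge> 1 \<and> q = p ^ k)"

definition subf :: "nat \<Rightarrow> 'a::{field,finite} set" where
  "subf m = {x. x ^ m = x}"

definition pt :: "nat \<Rightarrow> 'a::{field,finite} \<Rightarrow> 'a set" where
  "pt q x = {c * x | c. c \<in> subf q}"

definition points :: "nat \<Rightarrow> 'a::{field,finite} set set" where
  "points q = pt q ` (UNIV - {0})"

definition is_line :: "nat \<Rightarrow> 'a::{field,finite} set \<Rightarrow> bool" where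
  "is_line q S \<longleftrightarrow> (\<exists>a b. (\<forall>c\<in>subf q. \<forall>d\<in>subf q. c * a + d * b = 0 \<longrightarrow> c = 0 \<and> d = 0)
      \<and> S = {c * a + d * b | c d. c \<in> subf q \<and> d \<in> subf q})"

definition line_points :: "nat \<Rightarrow> 'a::{field,finite} set \<Rightarrow> 'a set set" where
  "line_points q S = pt q ` (S - {0})"

definition is_line_spread :: "nat \<Rightarrow> 'a::{field,finite} set set \<Rightarrow> bool" where
  "is_line_spread q Fs \<longleftrightarrow> (\<forall>S\<in>Fs. is_line q S) \<and>
     (\<forall>p\<in>points q. \<exists>!S. S \<in> Fs \<and> p \<in> line_points q S)"

definition desarg_spread :: "nat \<Rightarrow> 'a::{field,finite} set set" where
  "desarg_spread q = (\<lambda>x. {c * x | c. c \<in> subf (q^2)}) ` (UNIV - {0})"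

text \<open>Image of a 3-uple embedding: phi injective F-linear F^4 -> L is given by
  the images e0..e3 of the standard basis, which are F-linearly independent.\<close>
definition is_3uple_image :: "nat \<Rightarrow> 'a::{field,finite} set set \<Rightarrow> bool" where
  "is_3uple_image q X \<longleftrightarrow> (\<exists>e :: nat \<Rightarrow> 'a.
     (\<forall>a :: nat \<Rightarrow> 'a. (\<forall>i<4. a i \<in> subf q) \<longrightarrow> (\<Sum>i<4. a i * e i) = 0 \<longrightarrow> (\<forall>i<4. a i = 0)) \<and>
     X = {pt q (t0^3 * e 0 + t0^2 * t1 * e 1 + t0 * t1^2 * e 2 + t1^3 * e 3) | t0 t1.
            t0 \<in> subf q \<and> t1 \<in> subf q \<and> (t0, t1) \<noteq> (0, 0)})"

definition has_mixed_partition :: "nat \<Rightarrow> nat \<Rightarrow> 'a::{field,finite} itself \<Rightarrow> bool" where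
  "has_mixed_partition q r _ \<longleftrightarrow> (\<exists>(Lns :: 'a set set set) Cub.
     (\<forall>X\<in>Lns. \<exists>S. is_line q S \<and> X = line_points q S) \<and>
     (\<forall>X\<in>Cub. is_3uple_image q X) \<and>
     Lns \<inter> Cub = {} \<and> card Lns = r \<and> card Cub = q^2 + 1 - r \<and>
     (\<forall>p\<in>points q. \<exists>!X. X \<in> Lns \<union> Cub \<and> p \<in> X))"

end

theory Submission imports Defs "HOL-Computational_Algebra.Polynomial" begin



locale ffq =
  fixes T :: "'a::{field,finite} itself" and q p e :: nat
  assumes prm: "prime p" and e1: "e \<ge> 1" and qpe: "q = p ^ e"
    and cardL: "card (UNIV :: 'a set) = q ^ 4"
begin

lemma sum_shift: "(\<Sum>y\<in>(UNIV::'a set). y + 1) = (\<Sum>y\<in>UNIV. y)"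
proof -
  have "(\<Sum>y\<in>(UNIV::'a set). y + 1) = (\<Sum>y\<in>(\<lambda>y. y+1) ` UNIV. y)"
    by (subst sum.reindex) (auto simp: inj_on_def)
  also have "(\<lambda>y::'a. y+1) ` UNIV = UNIV"
    by (rule surjI[where f="\<lambda>y. y - 1"]) simp
  finally show ?thesis .
qed

lemma char_p: "(of_nat p :: 'a) = 0"
proof -
  have "(\<Sum>y\<in>(UNIV::'a set). y + 1) = (\<Sum>y\<in>UNIV. y) + of_nat (card (UNIV::'a set))"
    by (simp add: sum.distrib)
  hence "(of_nat (card (UNIV::'a set)) :: 'a) = 0" using sum_shift by simp
  hence "(of_nat p :: 'a) ^ (e*4) = 0" by (simp add: cardL qpe power_mult)
  thus ?thesis by simp
qed

lemma of_nat_p_mult: "p dvd n \<Longrightarrow> (of_nat n :: 'a) = 0"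
  using char_p by (auto simp: dvd_def)

lemma frob1: "((x::'a) + y) ^ p = x ^ p + y ^ p"
proof -
  have p0: "p > 0" using prm prime_gt_0_nat by blast
  have "(x + y) ^ p = (\<Sum>k\<le>p. of_nat (p choose k) * x ^ k * y ^ (p - k))"
    by (rule binomial_ring)
  also have "\<dots> = (\<Sum>k\<in>{0,p}. of_nat (p choose k) * x ^ k * y ^ (p - k))"
  proof (rule sum.mono_neutral_right)
    show "\<forall>i\<in>{..p} - {0, p}. of_nat (p choose i) * x ^ i * y ^ (p - i) = 0"
    proof
      fix i assume "i \<in> {..p} - {0, p}"
      hence "p dvd (p choose i)" using prm p0 by (intro dvd_choose_prime) auto
      thus "of_nat (p choose i) * x ^ i * y ^ (p - i) = 0" using of_nat_p_mult by simp
    qed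
  qed auto
  also have "\<dots> = x ^ p + y ^ p" using p0 by simp
  finally show ?thesis .
qed

lemma pow_Suc_p: "(z::'a) ^ (p ^ Suc j) = (z ^ (p ^ j)) ^ p"
  by (metis power_Suc2 power_mult)

lemma frobp: "((x::'a) + y) ^ (p ^ j) = x ^ (p ^ j) + y ^ (p ^ j)"
proof (induction j arbitrary: x y)
  case 0 thus ?case by simp
next
  case (Suc j)
  have "(x + y) ^ (p ^ Suc j) = ((x + y) ^ (p ^ j)) ^ p" by (rule pow_Suc_p)
  also have "\<dots> = (x ^ (p ^ j) + y ^ (p ^ j)) ^ p" by (simp only: Suc)
  also have "\<dots> = (x ^ (p ^ j)) ^ p + (y ^ (p ^ j)) ^ p" by (rule frob1)
  also have "\<dots> = x ^ (p ^ Suc j) + y ^ (p ^ Suc j)" by (simp only: pow_Suc_p)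
  finally show ?case .
qed

lemma frob: "((x::'a) + y) ^ (q ^ j) = x ^ (q ^ j) + y ^ (q ^ j)"
  using frobp[of x y "e*j"] by (simp add: qpe power_mult)

lemma fermat: "(x::'a) ^ (q ^ 4) = x"
proof (cases "x = 0")
  case True thus ?thesis using e1 prm qpe by (simp add: prime_gt_0_nat)
next
  case False
  let ?U = "UNIV - {0::'a}"
  have "(\<Prod>y\<in>?U. x * y) = (\<Prod>y\<in>(\<lambda>y. x*y) ` ?U. y)"
    using False by (subst prod.reindex) (auto simp: inj_on_def)
  also have "(\<lambda>y. x*y) ` ?U = ?U"
  proof
    show "(\<lambda>y. x*y) ` ?U \<subseteq> ?U" using False by auto
    show "?U \<subseteq> (\<lambda>y. x*y) ` ?U"
    proof
      fix z assume "z \<in> ?U"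
      hence "z = x * (z / x)" "z / x \<in> ?U" using False by auto
      thus "z \<in> (\<lambda>y. x*y) ` ?U" by blast
    qed
  qed
  finally have "x ^ card ?U * (\<Prod>y\<in>?U. y) = (\<Prod>y\<in>?U. y)"
    by (simp add: prod.distrib)
  moreover have "(\<Prod>y\<in>?U. y) \<noteq> 0" by simp
  ultimately have "x ^ card ?U = 1" by simp
  moreover have "card ?U = q^4 - 1" using cardL by (simp add: card_Diff_singleton)
  moreover have "q^4 \<ge> 1" using cardL
    by (metis One_nat_def Suc_leI UNIV_not_empty card_gt_0_iff finite_UNIV)
  ultimately have "x ^ (q^4 - 1) = 1" by simp
  hence "x * x ^ (q^4 - 1) = x" by simp
  thus ?thesis using \<open>q^4 \<ge> 1\<close> by (metis power_Suc Suc_diff_1 One_nat_def Suc_le_eq)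
qed

lemma q2: "q \<ge> 2"
proof -
  have "p \<ge> 2" using prm prime_ge_2_nat by blast
  moreover have "p \<le> p ^ e" using e1 \<open>p \<ge> 2\<close> by (simp add: self_le_power)
  ultimately show ?thesis using qpe by simp
qed

lemma qpos: "q ^ j > 0" using q2 by simp

abbreviation FF where "FF \<equiv> (subf q :: 'a set)"
abbreviation CC where "CC \<equiv> (subf (q^2) :: 'a set)"

lemma subf_iff: "x \<in> subf m \<longleftrightarrow> x ^ m = x" by (simp add: subf_def)

lemma sub_add: "x \<in> subf (q^j) \<Longrightarrow> y \<in> subf (q^j) \<Longrightarrow> (x::'a) + y \<in> subf (q^j)"
  by (simp add: subf_iff frob)
lemma sub_mult: "x \<in> subf (q^j) \<Longrightarrow> y \<in> subf (q^j) \<Longrightarrow> (x::'a) * y \<in> subf (q^j)"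
  by (simp add: subf_iff power_mult_distrib)
lemma sub_0: "(0::'a) \<in> subf (q^j)" using qpos[of j] by (simp add: subf_iff)
lemma sub_1: "(1::'a) \<in> subf (q^j)" by (simp add: subf_iff)
lemma frob_neg: "(- (x::'a)) ^ (q^j) = - (x ^ (q^j))"
proof -
  have "(x + - x) ^ (q^j) = x ^ (q^j) + (-x) ^ (q^j)" by (rule frob)
  moreover have "(0::'a) ^ (q^j) = 0" using qpos[of j] by simp
  ultimately have "0 = x ^ (q^j) + (-x) ^ (q^j)" by simp
  thus ?thesis by (simp add: eq_neg_iff_add_eq_0 add.commute)
qed
lemma frob_diff: "((x::'a) - y) ^ (q^j) = x ^ (q^j) - y ^ (q^j)"
  using frob[of x "-y" j] frob_neg[of y j] by simp
lemma sub_neg: "x \<in> subf (q^j) \<Longrightarrow> - (x::'a) \<in> subf (q^j)"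
  by (simp add: subf_iff frob_neg)
lemma sub_diff: "x \<in> subf (q^j) \<Longrightarrow> y \<in> subf (q^j) \<Longrightarrow> (x::'a) - y \<in> subf (q^j)"
  by (simp add: subf_iff frob_diff)
lemma sub_inv: "x \<in> subf (q^j) \<Longrightarrow> inverse (x::'a) \<in> subf (q^j)"
  by (simp add: subf_iff power_inverse)
lemma sub_pow: "x \<in> subf (q^j) \<Longrightarrow> (x::'a) ^ n \<in> subf (q^j)"
  by (induction n) (auto simp: sub_1 sub_mult)
lemma F_sub_C: "x \<in> FF \<Longrightarrow> x \<in> CC"
  by (simp add: subf_iff power2_eq_square power_mult)

lemma subq: "subf q = subf (q^1)" by simp
lemmas F_add = sub_add[of _ 1, folded subq]
lemmas F_mult = sub_mult[of _ 1, folded subq]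
lemmas F_0 = sub_0[of 1, folded subq]
lemmas F_1 = sub_1[of 1, folded subq]
lemmas F_neg = sub_neg[of _ 1, folded subq]
lemmas F_diff = sub_diff[of _ 1, folded subq]
lemmas F_inv = sub_inv[of _ 1, folded subq]
lemmas F_pow = sub_pow[of _ 1, folded subq]

lemma frob_inj: "(x::'a) ^ q = y ^ q \<Longrightarrow> x = y"
proof -
  assume "x ^ q = y ^ q"
  hence "(x ^ q) ^ (q^3) = (y ^ q) ^ (q^3)" by simp
  thus "x = y" using fermat[of x] fermat[of y]
    by (simp add: power_mult[symmetric] power_Suc[symmetric] mult.commute[of q] del: power_Suc)
qed

lemma card_roots_le:
  assumes "m \<ge> 2"
  shows "card (subf m :: 'a set) \<le> m"
proof -
  let ?P = "monom (1::'a) m - [:0, 1:]"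
  obtain n where n: "m = Suc (Suc n)" using assms by (metis add_2_eq_Suc le_Suc_ex)
  have c: "coeff ?P m = 1" using n by simp
  hence "?P \<noteq> 0" by (metis coeff_0 zero_neq_one)
  hence "card {x. poly ?P x = 0} \<le> degree ?P" by (rule card_poly_roots_bound)
  moreover have "degree ?P \<le> m" using assms
    by (intro degree_diff_le) (auto simp: degree_monom_le)
  moreover have "{x. poly ?P x = 0} = subf m" by (auto simp: subf_def poly_monom)
  ultimately show ?thesis by simp
qed

definition NN where "NN = q^3 + q^2 + q + 1"

lemma NN_eq: "(q - 1) * NN = q^4 - 1"
proof -
  have "int ((q - 1) * NN) = int (q-1) * int NN" by (simp only: of_nat_mult)
  also have "\<dots> = (int q - 1) * (int q ^ 3 + int q ^ 2 + int q + 1)"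
    using q2 by (simp add: NN_def of_nat_diff)
  also have "\<dots> = int q ^ 4 - 1" by (simp add: algebra_simps eval_nat_numeral)
  also have "\<dots> = int (q^4 - 1)" using q2 by (simp add: of_nat_diff)
  finally show ?thesis by (simp only: of_nat_eq_iff)
qed

lemma pow_NN_F: "(x::'a) ^ NN \<in> FF"
proof -
  have "NN * q = q^4 + (q^3 + q^2 + q)" by (simp add: NN_def algebra_simps eval_nat_numeral)
  hence "(x ^ NN) ^ q = x ^ (q^4) * x ^ (q^3 + q^2 + q)" by (simp add: power_mult[symmetric] power_add)
  also have "\<dots> = x ^ NN" using fermat[of x] by (simp add: NN_def power_add)
  finally show ?thesis by (simp add: subf_iff)
qed

lemma card_fiber: "card {x::'a. x ^ NN = c} \<le> NN"
proof -
  have NN1: "NN \<ge> 1" by (simp add: NN_def)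
  let ?P = "monom (1::'a) NN - [:c:]"
  obtain n where n: "NN = Suc n" using NN1 by (cases NN) auto
  have "coeff ?P NN = 1" using n by simp
  hence "?P \<noteq> 0" by (metis coeff_0 zero_neq_one)
  hence "card {x. poly ?P x = 0} \<le> degree ?P" by (rule card_poly_roots_bound)
  moreover have "degree ?P \<le> NN"
    by (intro degree_diff_le) (auto simp: degree_monom_le)
  moreover have "{x. poly ?P x = 0} = {x. x ^ NN = c}" by (auto simp: poly_monom)
  ultimately show ?thesis by simp
qed

lemma card_F: "card FF = q"
proof (rule antisym)
  show "card FF \<le> q" using card_roots_le q2 by simp
  have "UNIV - {0::'a} \<subseteq> (\<Union>c\<in>FF - {0}. {x. x ^ NN = c})"
    using pow_NN_F by auto
  hence "card (UNIV - {0::'a}) \<le> card (\<Union>c\<in>FF - {0}. {x. x ^ NN = c})"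
    by (intro card_mono) auto
  also have "\<dots> \<le> (\<Sum>c\<in>FF - {0}. card {x::'a. x ^ NN = c})" by (rule card_UN_le) simp
  also have "\<dots> \<le> (\<Sum>c\<in>FF - {0}. NN)" by (intro sum_mono card_fiber)
  also have "\<dots> = card (FF - {0}) * NN" by simp
  finally have "q^4 - 1 \<le> card (FF - {0}) * NN" using cardL by (simp add: card_Diff_singleton)
  hence "(q - 1) * NN \<le> card (FF - {0}) * NN" using NN_eq by simp
  moreover have "NN > 0" by (simp add: NN_def)
  ultimately have "q - 1 \<le> card (FF - {0})" using mult_le_cancel2 by blast
  moreover have "card (FF - {0}) = card FF - 1" using F_0 by (simp add: card_Diff_singleton)
  moreover have "card FF > 0" using F_0 by (auto simp: card_gt_0_iff)
  ultimately show "q \<le> card FF" using q2 by linarith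
qed


definition kk where "kk = 1 + q + q^2"

lemma kk_coprime: "coprime kk NN"
proof -
  have kk_alt: "kk = (1+q)*q + 1" by (simp add: kk_def power2_eq_square algebra_simps)
  have "gcd q ((1+q)*q + 1) = gcd q 1" by (rule gcd_add_mult)
  hence "coprime q kk" using kk_alt by (simp add: coprime_iff_gcd_eq_1)
  hence c3: "coprime (q^3) kk" by simp
  have NN_alt: "NN = 1 * kk + q^3" by (simp add: kk_def NN_def)
  have "gcd kk (1 * kk + q^3) = gcd kk (q^3)" by (rule gcd_add_mult)
  thus ?thesis using c3 NN_alt by (simp add: coprime_iff_gcd_eq_1 gcd.commute)
qed

lemma ex_inv: "\<exists>mj. kk * fst mj = NN * snd mj + 1"
proof -
  have "kk \<noteq> 0" by (simp add: kk_def)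
  from bezout_nat[OF this, of NN] obtain x y where "kk * x = NN * y + gcd kk NN" by blast
  thus ?thesis using kk_coprime by (intro exI[of _ "(x,y)"]) (simp add: coprime_iff_gcd_eq_1)
qed

definition mj where "mj = (SOME mj. kk * fst mj = NN * snd mj + 1)"
lemma mmjj: "kk * fst mj = NN * snd mj + 1" unfolding mj_def by (rule someI_ex[OF ex_inv])

lemma pow_kkmm: "(z::'a) ^ (kk * fst mj) = (z ^ NN) ^ (snd mj) * z"
  by (simp only: mmjj power_add power_mult power_one_right)

lemma xNN: "(x::'a) \<noteq> 0 \<Longrightarrow> (x ^ NN) ^ n \<in> FF \<and> (x ^ NN) ^ n \<noteq> 0"
  using pow_NN_F[of x] F_pow by auto

lemma pt_mem: "(x::'a) \<in> pt q x" unfolding pt_def using F_1 by force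

lemma pt_scale: "f \<in> FF \<Longrightarrow> f \<noteq> 0 \<Longrightarrow> pt q (f * (x::'a)) = pt q x"
  unfolding pt_def
proof (intro set_eqI iffI)
  fix y assume f: "f \<in> FF" "f \<noteq> 0"
  { assume "y \<in> {c * (f * x) |c. c \<in> FF}"
    then obtain c where c: "c \<in> FF" "y = c * (f * x)" by blast
    hence "y = (c * f) * x" "c * f \<in> FF" using F_mult f by (auto simp: mult.assoc)
    thus "y \<in> {c * x |c. c \<in> FF}" by blast }
  { assume "y \<in> {c * x |c. c \<in> FF}"
    then obtain c where c: "c \<in> FF" "y = c * x" by blast
    have "c * inverse f \<in> FF" using F_mult F_inv f c by blast
    moreover have "y = (c * inverse f) * (f * x)" using c f by simp
    ultimately show "y \<in> {c * (f * x) |c. c \<in> FF}" by blast }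
qed

lemma pt_eq_imp: "pt q (y::'a) = pt q x \<Longrightarrow> \<exists>f\<in>FF. y = f * x"
  using pt_mem[of y] unfolding pt_def by auto

lemma pt_eqI: "y = f * x \<Longrightarrow> f \<in> FF \<Longrightarrow> (y::'a) \<noteq> 0 \<Longrightarrow> pt q y = pt q x"
  using pt_scale by auto

lemma phi_inj:
  assumes "(y1::'a) \<noteq> 0" "y2 \<noteq> 0" "pt q (y1 ^ kk) = pt q (y2 ^ kk)"
  shows "pt q y1 = pt q y2"
proof -
  obtain f where f: "f \<in> FF" "y1 ^ kk = f * y2 ^ kk" using pt_eq_imp[OF assms(3)] by blast
  hence "(y1 ^ kk) ^ fst mj = f ^ fst mj * (y2 ^ kk) ^ fst mj" by (simp add: power_mult_distrib)
  hence e: "(y1 ^ NN) ^ snd mj * y1 = f ^ fst mj * ((y2 ^ NN) ^ snd mj * y2)"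
    by (simp only: power_mult[symmetric] pow_kkmm)
  define g where "g = f ^ fst mj * (y2 ^ NN) ^ snd mj * inverse ((y1 ^ NN) ^ snd mj)"
  have "y1 = g * y2" using e xNN[OF assms(1), of "snd mj"] unfolding g_def by (simp add: field_simps)
  moreover have "g \<in> FF"
  proof -
    have "f ^ fst mj \<in> FF" using F_pow f(1) by blast
    hence "f ^ fst mj * (y2 ^ NN) ^ snd mj \<in> FF" using xNN[OF assms(2)] F_mult by blast
    thus ?thesis unfolding g_def using xNN[OF assms(1)] F_mult F_inv by blast
  qed
  ultimately show ?thesis using pt_eqI assms by blast
qed

lemma phi_wd:
  assumes "pt q (y1::'a) = pt q y2" "y1 \<noteq> 0"
  shows "pt q (y1 ^ kk) = pt q (y2 ^ kk)"
proof -
  obtain f where "f \<in> FF" "y1 = f * y2" using pt_eq_imp[OF assms(1)] by blast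
  thus ?thesis using assms(2) by (intro pt_eqI[of _ "f ^ kk"]) (auto simp: power_mult_distrib F_pow)
qed

lemma phi_surj:
  assumes "(z::'a) \<noteq> 0"
  shows "pt q ((z ^ fst mj) ^ kk) = pt q z"
proof -
  have "(z ^ fst mj) ^ kk = (z ^ NN) ^ snd mj * z"
    by (simp only: power_mult[symmetric] mult.commute[of "fst mj"] pow_kkmm)
  thus ?thesis using xNN[OF assms] assms by (intro pt_eqI) auto
qed

definition indep where
  "indep a b \<longleftrightarrow> (\<forall>c\<in>FF. \<forall>d\<in>FF. c * a + d * (b::'a) = 0 \<longrightarrow> c = 0 \<and> d = 0)"
definition span where "span a b = {c * a + d * (b::'a) | c d. c \<in> FF \<and> d \<in> FF}"

lemma is_line_iff: "is_line q S \<longleftrightarrow> (\<exists>a b. indep a b \<and> S = span a b)"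
  unfolding is_line_def indep_def span_def by simp

lemma indep_nz: "indep a b \<Longrightarrow> b \<noteq> 0 \<and> a \<noteq> 0"
  unfolding indep_def using F_0 F_1 by (metis add_0 mult_1 mult_zero_left one_neq_zero add.right_neutral)

lemma span_0: "0 \<in> span a b" unfolding span_def using F_0 by force
lemma span_b: "b \<in> span a b" unfolding span_def using F_0 F_1 by force

lemma span_scale: "y \<in> span a b \<Longrightarrow> f \<in> FF \<Longrightarrow> f * y \<in> span a b"
  unfolding span_def
proof -
  assume "y \<in> {c * a + d * b |c d. c \<in> FF \<and> d \<in> FF}" "f \<in> FF"
  then obtain c d where "c \<in> FF" "d \<in> FF" "y = c * a + d * b" by blast
  thus "f * y \<in> {c * a + d * b |c d. c \<in> FF \<and> d \<in> FF}" using \<open>f \<in> FF\<close> F_mult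
    by (intro CollectI exI[of _ "f*c"] exI[of _ "f*d"]) (auto simp: algebra_simps)
qed

lemma card_span: assumes "indep a b" shows "card (span a b) = q^2"
proof -
  have "span a b = (\<lambda>(c,d). c * a + d * b) ` (FF \<times> FF)" unfolding span_def by auto
  moreover have "inj_on (\<lambda>(c,d). c * a + d * b) (FF \<times> FF)"
  proof (rule inj_onI, clarify)
    fix c d c' d' assume h: "c \<in> FF" "d \<in> FF" "c' \<in> FF" "d' \<in> FF" "c * a + d * b = c' * a + d' * b"
    hence "(c - c') * a + (d - d') * b = 0" by (simp add: algebra_simps)
    hence "c - c' = 0 \<and> d - d' = 0" using assms h F_diff unfolding indep_def by blast
    thus "c = c' \<and> d = d'" by simp
  qed
  ultimately have "card (span a b) = card (FF \<times> FF)" by (simp add: card_image)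
  thus ?thesis using card_F by (simp add: card_cartesian_product power2_eq_square)
qed

lemma indep_scale: "indep a b \<Longrightarrow> l \<noteq> 0 \<Longrightarrow> indep (l * a) (l * b)"
  unfolding indep_def
proof (intro ballI impI)
  fix c d assume h: "\<forall>c\<in>FF. \<forall>d\<in>FF. c * a + d * b = 0 \<longrightarrow> c = 0 \<and> d = 0" "l \<noteq> 0"
    "c \<in> FF" "d \<in> FF" "c * (l * a) + d * (l * b) = 0"
  hence "l * (c * a + d * b) = 0" by (simp add: algebra_simps)
  hence "c * a + d * b = 0" using h(2) by simp
  thus "c = 0 \<and> d = 0" using h by blast
qed

lemma span_scale_img: "(\<lambda>y. l * y) ` span a b = span (l * a) (l * b)"
proof (intro set_eqI iffI)
  fix z assume "z \<in> (\<lambda>y. l * y) ` span a b"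
  then obtain c d where "c \<in> FF" "d \<in> FF" "z = l * (c * a + d * b)" unfolding span_def by blast
  thus "z \<in> span (l * a) (l * b)" unfolding span_def
    by (intro CollectI exI[of _ c] exI[of _ d]) (auto simp: algebra_simps)
next
  fix z assume "z \<in> span (l * a) (l * b)"
  then obtain c d where "c \<in> FF" "d \<in> FF" "z = c * (l * a) + d * (l * b)" unfolding span_def by blast
  moreover hence "c * a + d * b \<in> span a b" unfolding span_def by blast
  ultimately show "z \<in> (\<lambda>y. l * y) ` span a b"
    by (intro image_eqI[of _ _ "c * a + d * b"]) (auto simp: algebra_simps)
qed
lemma spread_line: "is_line_spread q Fs \<Longrightarrow> S \<in> Fs \<Longrightarrow> \<exists>a b. indep a b \<and> S = span a (b::'a)"
proof -
  assume "is_line_spread q Fs" "S \<in> Fs"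
  hence "is_line q S" unfolding is_line_spread_def by (elim conjE) (rule bspec)
  thus ?thesis unfolding is_line_iff .
qed


lemma spread_cover:
  assumes sp: "is_line_spread q Fs" and z: "(z::'a) \<noteq> 0"
  shows "\<exists>S\<in>Fs. z \<in> S"
proof -
  have "pt q z \<in> points q" unfolding points_def using z by auto
  hence "\<exists>!S. S \<in> Fs \<and> pt q z \<in> line_points q S"
    using sp unfolding is_line_spread_def by (elim conjE bspec)
  then obtain S where S: "S \<in> Fs" "pt q z \<in> line_points q S" by (elim ex1E) blast
  then obtain y where y: "y \<in> S" "y \<noteq> 0" "pt q z = pt q y" unfolding line_points_def by auto
  obtain f where f: "f \<in> FF" "z = f * y" using pt_eq_imp[OF y(3)] by blast
  obtain a b where ab: "indep a b" "S = span a b" using spread_line[OF sp S(1)] by blast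
  have "z \<in> S" using span_scale[of y a b f] ab y f by simp
  thus ?thesis using S by blast
qed

lemma spread_unique:
  assumes sp: "is_line_spread q Fs" and "S1 \<in> Fs" "S2 \<in> Fs" "(z::'a) \<in> S1" "z \<in> S2" "z \<noteq> 0"
  shows "S1 = S2"
proof -
  have "pt q z \<in> points q" unfolding points_def using assms by auto
  hence ex1: "\<exists>!S. S \<in> Fs \<and> pt q z \<in> line_points q S"
    using sp unfolding is_line_spread_def by (elim conjE bspec)
  have "pt q z \<in> line_points q S1" "pt q z \<in> line_points q S2"
    unfolding line_points_def using assms by auto
  with ex1 show ?thesis
    by (elim ex1E) (metis assms(2,3))
qed

lemma card_Fs:
  assumes sp: "is_line_spread q (Fs :: 'a set set)"
  shows "card Fs = q^2 + 1"
proof -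
  have cS: "card (S - {0}) = q^2 - 1" if S: "S \<in> Fs" for S
  proof -
    obtain a b where "indep a b" "S = span a b" using spread_line[OF sp S] by blast
    thus ?thesis using card_span span_0 by (simp add: card_Diff_singleton)
  qed
  have U: "UNIV - {0::'a} = (\<Union>S\<in>Fs. S - {0})" using spread_cover[OF sp] by auto
  have "card (UNIV - {0::'a}) = (\<Sum>S\<in>Fs. card (S - {0}))"
    unfolding U
  proof (rule card_UN_disjoint)
    show "\<forall>i\<in>Fs. \<forall>j\<in>Fs. i \<noteq> j \<longrightarrow> (i - {0}) \<inter> (j - {0}) = {}"
      using spread_unique[OF sp] by blast
  qed auto
  also have "\<dots> = card Fs * (q^2 - 1)" using cS by simp
  finally have e: "q^4 - 1 = card Fs * (q^2 - 1)" using cardL by (simp add: card_Diff_singleton)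
  have h: "q^4 - 1 = (q^2 + 1) * (q^2 - 1)"
  proof -
    have g: "(n + 1) * (n - 1) = n * n - 1" if "n \<ge> 1" for n :: nat
      using that by (cases n) auto
    have "q^4 = q^2 * q^2" by (simp add: power_add[symmetric])
    thus ?thesis using g[of "q^2"] q2 by simp
  qed
  moreover have "q^2 - 1 > 0"
  proof -
    have "q * q \<ge> 2 * 2" using q2 mult_le_mono by blast
    thus ?thesis by (simp add: power2_eq_square)
  qed
  ultimately show ?thesis using trans[OF sym[OF e] h] mult_right_cancel[of "q^2 - 1" "card Fs" "q^2+1"] by simp
qed

definition XX :: "'a set \<Rightarrow> 'a set set" where
  "XX S = (\<lambda>y. pt q (y ^ kk)) ` (S - {0})"

lemma XX_meet:
  assumes sp: "is_line_spread q Fs" and "S1 \<in> Fs" "S2 \<in> Fs" "P \<in> XX S1" "P \<in> XX S2"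
  shows "S1 = S2"
proof -
  obtain y1 where y1: "y1 \<in> S1" "y1 \<noteq> 0" "P = pt q (y1 ^ kk)" using assms(4) unfolding XX_def by auto
  obtain y2 where y2: "y2 \<in> S2" "y2 \<noteq> 0" "P = pt q (y2 ^ kk)" using assms(5) unfolding XX_def by auto
  have "pt q (y1 ^ kk) = pt q (y2 ^ kk)" using y1(3) y2(3) by simp
  from phi_inj[OF y1(2) y2(2) this] have "pt q y1 = pt q y2" .
  then obtain f where f: "f \<in> FF" "y1 = f * y2" using pt_eq_imp by blast
  obtain a b where ab: "indep a b" "S2 = span a b" using spread_line[OF sp assms(3)] by blast
  have "y1 \<in> S2" using span_scale[of y2 a b f] ab y2 f by simp
  thus ?thesis using spread_unique[OF sp assms(2,3) y1(1) _ y1(2)] by simp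
qed

lemma XX_ne: assumes sp: "is_line_spread q Fs" and S: "S \<in> Fs" shows "XX S \<noteq> {}"
proof -
  obtain a b where ab: "indep a b" "S = span a b" using spread_line[OF sp S] by blast
  hence "b \<in> S" "b \<noteq> 0" using span_b indep_nz by auto
  thus ?thesis unfolding XX_def by blast
qed

lemma XX_inj: "is_line_spread q Fs \<Longrightarrow> inj_on XX Fs"
proof (rule inj_onI)
  fix S1 S2 assume sp: "is_line_spread q Fs" and h: "S1 \<in> Fs" "S2 \<in> Fs" "XX S1 = XX S2"
  obtain P where "P \<in> XX S1" using XX_ne[OF sp h(1)] by blast
  thus "S1 = S2" using XX_meet[OF sp h(1,2)] h(3) by simp
qed

lemma XX_desarg:
  assumes sp: "is_line_spread q Fs" and S: "S \<in> Fs" "S \<in> desarg_spread q"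
  shows "\<exists>S'. is_line q S' \<and> XX S = line_points q S'"
proof -
  obtain x where x: "(x::'a) \<noteq> 0" "S = {c * x | c. c \<in> CC}" using S(2) unfolding desarg_spread_def by auto
  obtain a b where ab: "indep a b" "S = span a b" using spread_line[OF sp S(1)] by blast
  define l where "l = x ^ (kk - 1)"
  have l0: "l \<noteq> 0" using x by (simp add: l_def)
  have kx: "x ^ kk = l * x" unfolding l_def by (simp add: kk_def mult.commute)
  define S' where "S' = (\<lambda>y. l * y) ` S"
  have line: "is_line q S'" unfolding S'_def ab(2) span_scale_img is_line_iff
    using indep_scale[OF ab(1) l0] by blast
  have "XX S = line_points q S'"
  proof (intro set_eqI iffI)
    fix P assume "P \<in> XX S"
    then obtain y where y: "y \<in> S" "y \<noteq> 0" "P = pt q (y ^ kk)" unfolding XX_def by auto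
    then obtain c where c0: "c \<in> CC" "y = c * x" using x(2) by auto
    hence c: "c \<in> CC" "c * x \<noteq> 0" "P = pt q ((c * x) ^ kk)" using y by auto
    have "c ^ kk * x \<in> S" using c sub_pow[of c 2] x(2) by blast
    moreover have "(c * x) ^ kk = l * (c ^ kk * x)" using kx by (simp add: power_mult_distrib algebra_simps)
    moreover have "l * (c ^ kk * x) \<noteq> 0" using l0 c x by auto
    ultimately show "P \<in> line_points q S'" unfolding line_points_def S'_def using c by auto
  next
    fix P assume "P \<in> line_points q S'"
    then obtain y where y: "y \<in> S'" "y \<noteq> 0" "P = pt q y" unfolding line_points_def by auto
    then obtain y0 where "y0 \<in> S" "y = l * y0" unfolding S'_def by auto
    then obtain c where "c \<in> CC" "y0 = c * x" using x(2) by auto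
    hence c: "c \<in> CC" "l * (c * x) \<noteq> 0" "P = pt q (l * (c * x))" using y \<open>y = l * y0\<close> by auto
    have c0: "c \<noteq> 0" using c by auto
    define c0 where "c0 = c ^ fst mj"
    have "c0 * x \<in> S" "c0 * x \<noteq> 0" unfolding c0_def using c0 x sub_pow[of c 2] c by auto
    moreover have "pt q ((c0 * x) ^ kk) = P"
    proof -
      have "(c0 * x) ^ kk = (c ^ NN) ^ snd mj * (l * (c * x))"
        unfolding c0_def by (simp add: power_mult_distrib power_mult[symmetric] mult.commute[of "fst mj"] pow_kkmm kx algebra_simps)
      hence "pt q ((c0 * x) ^ kk) = pt q (l * (c * x))" using c(2) xNN[OF c0]
        by (intro pt_eqI[of _ "(c ^ NN) ^ snd mj"]) auto
      thus ?thesis using c(3) by simp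
    qed
    ultimately show "P \<in> XX S" unfolding XX_def by force
  qed
  thus ?thesis using line by blast
qed

lemma pow_q_Suc: "(x::'a) ^ (q ^ Suc j) = (x ^ (q ^ j)) ^ q"
  by (metis power_Suc2 power_mult)

lemma F_fix: "c \<in> FF \<Longrightarrow> c ^ (q ^ j) = c"
proof (induction j)
  case 0 thus ?case by simp
next
  case (Suc j) thus ?case by (simp only: pow_q_Suc) (simp add: subf_iff)
qed

lemma frobq: "((x::'a) + y) ^ q = x ^ q + y ^ q" using frob[of x y 1] by simp

lemma frob_lin: "c \<in> FF \<Longrightarrow> d \<in> FF \<Longrightarrow> (c * (u::'a) + d) ^ (q ^ j) = c * u ^ (q ^ j) + d"
  by (simp add: frob power_mult_distrib F_fix)

lemma not_C_distinct:
  assumes "(u::'a) \<notin> CC"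
  shows "u \<noteq> u ^ q" "u \<noteq> u ^ (q^2)" "u \<noteq> u ^ (q^3)" "u ^ q \<noteq> u ^ (q^2)"
    "u ^ q \<noteq> u ^ (q^3)" "u ^ (q^2) \<noteq> u ^ (q^3)"
proof -
  have p2: "u ^ (q^2) = (u ^ q) ^ q" using pow_q_Suc[of u 1] by (simp add: power2_eq_square)
  have p3: "u ^ (q^3) = (u ^ (q^2)) ^ q" using pow_q_Suc[of u 2] by (simp only: eval_nat_numeral)
  have q34: "q^3 * q = q^4" by (simp add: eval_nat_numeral)
  have p4': "(u ^ (q^3)) ^ q = u ^ (q^4)" by (simp only: power_mult[symmetric] q34)
  have p4: "(u ^ (q^3)) ^ q = u" using p4' fermat[of u] by simp
  have c2: "u ^ (q^2) \<noteq> u" using assms by (simp add: subf_iff)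
  show a: "u \<noteq> u ^ q"
  proof
    assume h: "u = u ^ q"
    hence "(u ^ q) ^ q = u ^ q" by (rule arg_cong[where f="\<lambda>x. x ^ q", symmetric])
    hence "u ^ (q^2) = u" using p2 h by metis
    thus False using c2 by simp
  qed
  show "u \<noteq> u ^ (q^2)" using c2 by metis
  show "u \<noteq> u ^ (q^3)"
  proof
    assume h: "u = u ^ (q^3)"
    hence "u ^ q = (u ^ (q^3)) ^ q" by (rule arg_cong)
    hence "u ^ q = u" using p4 by simp
    thus False using a by simp
  qed
  show "u ^ q \<noteq> u ^ (q^2)"
  proof
    assume h: "u ^ q = u ^ (q^2)"
    hence "u ^ q = (u ^ q) ^ q" using p2 by simp
    hence "u = u ^ q" by (rule frob_inj)
    thus False using a by simp
  qed
  show "u ^ q \<noteq> u ^ (q^3)"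
  proof
    assume h: "u ^ q = u ^ (q^3)"
    hence "u ^ q = (u ^ (q^2)) ^ q" using p3 by simp
    hence "u = u ^ (q^2)" by (rule frob_inj)
    thus False using c2 by simp
  qed
  show "u ^ (q^2) \<noteq> u ^ (q^3)"
  proof
    assume h: "u ^ (q^2) = u ^ (q^3)"
    hence "(u ^ q) ^ q = (u ^ (q^2)) ^ q" using p2 p3 by simp
    hence "u ^ q = u ^ (q^2)" by (rule frob_inj)
    hence "u ^ q = (u ^ q) ^ q" using p2 by simp
    hence "u = u ^ q" by (rule frob_inj)
    thus False using a by simp
  qed
qed

lemma span_nz: "indep a b \<Longrightarrow> c \<in> FF \<Longrightarrow> d \<in> FF \<Longrightarrow> (c * a + d * (b::'a) = 0) \<longleftrightarrow> (c, d) = (0, 0)"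
  unfolding indep_def by auto

lemma notD_notC:
  assumes ab: "indep a b" and nD: "span a b \<notin> desarg_spread q"
  shows "a * inverse b \<notin> CC"
proof
  assume uC: "a * inverse b \<in> CC"
  have b0: "b \<noteq> 0" using indep_nz[OF ab] by simp
  let ?B = "{c * b | c. c \<in> CC}"
  have sub: "span a b \<subseteq> ?B"
  proof
    fix y assume "y \<in> span a b"
    then obtain c d where cd: "c \<in> FF" "d \<in> FF" "y = c * a + d * b" unfolding span_def by blast
    have "y = (c * (a * inverse b) + d) * b" using cd b0 by (simp add: algebra_simps)
    moreover have "c * (a * inverse b) + d \<in> CC"
      using cd uC F_sub_C sub_mult[of _ 2] sub_add[of _ 2] by blast
    ultimately show "y \<in> ?B" by blast
  qed
  have "?B = (\<lambda>c. c * b) ` CC" by auto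
  hence "card ?B \<le> card CC" by (simp add: card_image_le)
  also have "\<dots> \<le> q^2"
  proof -
    have "q * q \<ge> 2 * 1" using q2 by (intro mult_le_mono) auto
    hence "q^2 \<ge> 2" by (simp add: power2_eq_square)
    thus ?thesis by (rule card_roots_le)
  qed
  finally have "card ?B \<le> card (span a b)" using card_span[OF ab] by simp
  moreover have "card (span a b) \<le> card ?B" by (rule card_mono[OF _ sub]) simp
  ultimately have "card (span a b) = card ?B" by simp
  hence "span a b = ?B" using sub by (intro card_subset_eq) auto
  moreover have "?B \<in> desarg_spread q" unfolding desarg_spread_def using b0 by blast
  ultimately show False using nD by simp
qed

lemma conj_facts: "((u::'a) ^ q) ^ q = u ^ (q^2)" "(u ^ (q^2)) ^ q = u ^ (q^3)" "(u ^ (q^3)) ^ q = u"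
proof -
  show "(u ^ q) ^ q = u ^ (q^2)" using pow_q_Suc[of u 1] by (simp add: power2_eq_square)
  show "(u ^ (q^2)) ^ q = u ^ (q^3)" using pow_q_Suc[of u 2] by (simp only: eval_nat_numeral)
  have q34: "q^3 * q = q^4" by (simp add: eval_nat_numeral)
  have "(u ^ (q^3)) ^ q = u ^ (q^4)" by (simp only: power_mult[symmetric] q34)
  thus "(u ^ (q^3)) ^ q = u" using fermat[of u] by simp
qed

lemma deg3: "degree [:a0, a1, a2, a3:] \<le> 3"
  by (rule degree_le) (auto simp: coeff_pCons split: nat.split)

lemma cubic:
  assumes ab: "indep a b" and nD: "span a b \<notin> desarg_spread q"
  shows "is_3uple_image q (XX (span a b))"
proof -
  have b0: "b \<noteq> 0" using indep_nz[OF ab] by simp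
  define u where "u = a * inverse b"
  have ua: "a = u * b" using b0 by (simp add: u_def)
  define z1 where "z1 = u ^ q"
  define z2 where "z2 = u ^ (q^2)"
  define z3 where "z3 = u ^ (q^3)"
  have uC: "u \<notin> CC" using notD_notC[OF ab nD] by (simp add: u_def)
  note dist = not_C_distinct[OF uC, folded z1_def z2_def z3_def]
  have f1: "u ^ q = z1" "z1 ^ q = z2" "z2 ^ q = z3" "z3 ^ q = u"
    unfolding z1_def z2_def z3_def using conj_facts by auto
  define e where "e = (\<lambda>i::nat. if i = 0 then b^kk * (u*z1*z2) else if i = 1 then b^kk * (u*z1 + u*z2 + z1*z2)
     else if i = 2 then b^kk * (u+z1+z2) else b^kk)"
  have expand: "(c * a + d * b) ^ kk = c^3 * e 0 + c^2 * d * e 1 + c * d^2 * e 2 + d^3 * e 3"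
    if cd: "c \<in> FF" "d \<in> FF" for c d
  proof -
    have "c * a + d * b = b * (c * u + d)" using ua by (simp add: algebra_simps)
    hence 1: "(c * a + d * b) ^ kk = b ^ kk * (c * u + d) ^ kk" by (simp add: power_mult_distrib)
    have 2: "(c * u + d) ^ kk = (c * u + d) * (c * u + d) ^ (q^1) * (c * u + d) ^ (q^2)"
      by (simp add: kk_def power_add)
    have 3: "(c * u + d) ^ (q^1) = c * z1 + d" using frob_lin[OF cd, of u 1] z1_def by simp
    have 4: "(c * u + d) ^ (q^2) = c * z2 + d" using frob_lin[OF cd, of u 2] z2_def by simp
    show ?thesis unfolding 1 2 3 4 e_def
      by (simp add: power2_eq_square power3_eq_cube algebra_simps)
  qed
  have XXeq: "XX (span a b) = {pt q (t0^3 * e 0 + t0^2 * t1 * e 1 + t0 * t1^2 * e 2 + t1^3 * e 3) | t0 t1.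
            t0 \<in> FF \<and> t1 \<in> FF \<and> (t0, t1) \<noteq> (0, 0)}"
  proof (intro set_eqI iffI)
    fix P assume "P \<in> XX (span a b)"
    then obtain y where y: "y \<in> span a b" "y \<noteq> 0" "P = pt q (y ^ kk)" unfolding XX_def by auto
    then obtain c d where cd: "c \<in> FF" "d \<in> FF" "y = c * a + d * b" unfolding span_def by blast
    have "(c, d) \<noteq> (0, 0)" using cd y(2) by auto
    moreover have "P = pt q (c^3 * e 0 + c^2 * d * e 1 + c * d^2 * e 2 + d^3 * e 3)"
      using y(3) cd expand by simp
    ultimately show "P \<in> {pt q (t0^3 * e 0 + t0^2 * t1 * e 1 + t0 * t1^2 * e 2 + t1^3 * e 3) | t0 t1.
            t0 \<in> FF \<and> t1 \<in> FF \<and> (t0, t1) \<noteq> (0, 0)}" using cd by blast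
  next
    fix P assume "P \<in> {pt q (t0^3 * e 0 + t0^2 * t1 * e 1 + t0 * t1^2 * e 2 + t1^3 * e 3) | t0 t1.
            t0 \<in> FF \<and> t1 \<in> FF \<and> (t0, t1) \<noteq> (0, 0)}"
    then obtain t0 t1 where t: "t0 \<in> FF" "t1 \<in> FF" "(t0, t1) \<noteq> (0, 0)"
      "P = pt q (t0^3 * e 0 + t0^2 * t1 * e 1 + t0 * t1^2 * e 2 + t1^3 * e 3)" by blast
    have "t0 * a + t1 * b \<in> span a b" unfolding span_def using t by blast
    moreover have "t0 * a + t1 * b \<noteq> 0" using span_nz[OF ab t(1,2)] t(3) by simp
    moreover have "P = pt q ((t0 * a + t1 * b) ^ kk)" using t expand by simp
    ultimately show "P \<in> XX (span a b)" unfolding XX_def by blast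
  qed
  have indep4: "\<forall>A::nat \<Rightarrow> 'a. (\<forall>i<4. A i \<in> FF) \<longrightarrow> (\<Sum>i<4. A i * e i) = 0 \<longrightarrow> (\<forall>i<4. A i = 0)"
  proof (rule allI, intro impI)
    fix A :: "nat \<Rightarrow> 'a" assume AF: "\<forall>i<4. A i \<in> FF" and S0: "(\<Sum>i<4. A i * e i) = 0"
    have AF': "A 0 \<in> FF" "A 1 \<in> FF" "A 2 \<in> FF" "A 3 \<in> FF" using AF by auto
    have S4: "(\<Sum>i<4. A i * e i) = A 0 * e 0 + A 1 * e 1 + A 2 * e 2 + A 3 * e 3"
      by (simp add: eval_nat_numeral)
    define In where "In = A 0 * (u*z1*z2) + A 1 * (u*z1 + u*z2 + z1*z2) + A 2 * (u+z1+z2) + A 3"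
    have "b ^ kk * In = 0" using S0 S4 by (simp add: e_def In_def algebra_simps)
    hence In0: "In = 0" using b0 by simp
    define E1 where "E1 = u + z1 + z2 + z3"
    define E2 where "E2 = u*z1 + u*z2 + u*z3 + z1*z2 + z1*z3 + z2*z3"
    define E3 where "E3 = u*z1*z2 + u*z1*z3 + u*z2*z3 + z1*z2*z3"
    have E1F: "E1 \<in> FF" unfolding subf_iff E1_def by (simp add: frobq f1 ac_simps)
    have E2F: "E2 \<in> FF" unfolding subf_iff E2_def by (simp add: frobq power_mult_distrib f1 ac_simps)
    have E3F: "E3 \<in> FF" unfolding subf_iff E3_def by (simp add: frobq power_mult_distrib f1 ac_simps)
    define p3 where "p3 = - A 0"
    define p2 where "p2 = A 0 * E1 + A 1"
    define p1 where "p1 = - (A 0 * E2 + A 1 * E1 + A 2)"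
    define p0 where "p0 = A 0 * E3 + A 1 * E2 + A 2 * E1 + A 3"
    have pF: "p0 \<in> FF" "p1 \<in> FF" "p2 \<in> FF" "p3 \<in> FF"
      unfolding p0_def p1_def p2_def p3_def using AF' E1F E2F E3F
      by (intro F_add F_mult F_neg; simp)+
    have pq: "p0 ^ q = p0" "p1 ^ q = p1" "p2 ^ q = p2" "p3 ^ q = p3" using pF by (simp_all add: subf_iff)
    have InP: "In = p0 + z3 * (p1 + z3 * (p2 + z3 * p3))"
      unfolding In_def p0_def p1_def p2_def p3_def E1_def E2_def E3_def by (simp add: algebra_simps)
    define P where "P = [:p0, p1, p2, p3:]"
    have polyP: "poly P x = p0 + x * (p1 + x * (p2 + x * p3))" for x by (simp add: P_def)
    have frobP: "poly P (x ^ q) = (poly P x) ^ q" for x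
      unfolding polyP by (simp add: frobq power_mult_distrib pq)
    have r3: "poly P z3 = 0" using In0 InP polyP by simp
    have q0: "(0::'a) ^ q = 0" using q2 by simp
    have r0: "poly P u = 0" using frobP[of z3] r3 f1 q0 by simp
    have r1: "poly P z1 = 0" using frobP[of u] r0 f1 q0 by simp
    have r2: "poly P z2 = 0" using frobP[of z1] r1 f1 q0 by simp
    show "\<forall>i<4. A i = 0"
    proof (cases "P = 0")
      case True
      hence "p0 = 0" "p1 = 0" "p2 = 0" "p3 = 0" by (simp_all add: P_def)
      hence A: "A 0 = 0" "A 1 = 0" "A 2 = 0" "A 3 = 0"
        unfolding p0_def p1_def p2_def p3_def by simp_all
      show ?thesis
      proof (intro allI impI)
        fix i :: nat assume "i < 4"
        hence "i = 0 \<or> i = 1 \<or> i = 2 \<or> i = 3" by auto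
        thus "A i = 0" using A by auto
      qed
    next
      case False
      have "{u, z1, z2, z3} \<subseteq> {x. poly P x = 0}" using r0 r1 r2 r3 by auto
      hence "card {u, z1, z2, z3} \<le> card {x. poly P x = 0}" by (intro card_mono) auto
      also have "\<dots> \<le> degree P" using card_poly_roots_bound[OF False] .
      also have "\<dots> \<le> 3" unfolding P_def by (rule deg3)
      finally have "card {u, z1, z2, z3} \<le> 3" .
      moreover have "card {u, z1, z2, z3} = 4" using dist by simp
      ultimately show ?thesis by simp
    qed
  qed
  show ?thesis unfolding is_3uple_image_def using indep4 XXeq by blast
qed

end

theorem mainTheorem6:
  fixes q r :: nat and Fs :: "'a::{field,finite} set set"
  assumes "prime_power q"
    and "card (UNIV :: 'a set) = q ^ 4"
    and "r \<le> q ^ 2"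
    and "is_line_spread q Fs"
    and "card (Fs \<inter> desarg_spread q) = r"
  shows "has_mixed_partition q r TYPE('a)"
proof -
  obtain p e where pe: "prime p" "e \<ge> 1" "q = p ^ e" using assms(1) unfolding prime_power_def by blast
  interpret ffq "TYPE('a)" q p e by unfold_locales (use pe assms(2) in auto)
  note sp = assms(4)
  define D where "D = (desarg_spread q :: 'a set set)"
  define Lns where "Lns = XX ` (Fs \<inter> D)"
  define Cub where "Cub = XX ` (Fs - D)"
  have inj: "inj_on XX Fs" by (rule XX_inj[OF sp])
  have L1: "\<forall>X\<in>Lns. \<exists>S. is_line q S \<and> X = line_points q S"
    unfolding Lns_def D_def using XX_desarg[OF sp] by blast
  have L2: "\<forall>X\<in>Cub. is_3uple_image q X"
  proof
    fix X assume "X \<in> Cub"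
    then obtain S where S: "S \<in> Fs" "S \<notin> D" "X = XX S" unfolding Cub_def by blast
    obtain a b where ab: "indep a b" "S = span a b" using spread_line[OF sp S(1)] by blast
    show "is_3uple_image q X" using cubic[OF ab(1)] S ab(2) unfolding D_def by simp
  qed
  have L3: "Lns \<inter> Cub = {}"
  proof -
    have "Lns \<inter> Cub = XX ` ((Fs \<inter> D) \<inter> (Fs - D))" unfolding Lns_def Cub_def
      by (rule inj_on_image_Int[OF inj, symmetric]) auto
    moreover have "(Fs \<inter> D) \<inter> (Fs - D) = {}" by blast
    ultimately show ?thesis by simp
  qed
  have L4: "card Lns = r" unfolding Lns_def using assms(5) inj_on_subset[OF inj]
    by (simp add: card_image D_def)
  have L5: "card Cub = q^2 + 1 - r"
  proof -
    have "card Cub = card (Fs - D)" unfolding Cub_def using inj_on_subset[OF inj]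
      by (simp add: card_image)
    also have "\<dots> = card Fs - card (Fs \<inter> D)" by (rule card_Diff_subset_Int) simp
    finally show ?thesis using card_Fs[OF sp] assms(5) by (simp add: D_def)
  qed
  have L6: "\<forall>P\<in>points q. \<exists>!X. X \<in> Lns \<union> Cub \<and> P \<in> X"
  proof
    fix P :: "'a set" assume "P \<in> points q"
    then obtain z where z: "(z::'a) \<noteq> 0" "P = pt q z" unfolding points_def by auto
    define w where "w = z ^ fst mj"
    have w0: "w \<noteq> 0" using z by (simp add: w_def)
    obtain S where S: "S \<in> Fs" "w \<in> S" using spread_cover[OF sp w0] by blast
    have PS: "P \<in> XX S" unfolding XX_def using phi_surj[OF z(1)] z(2) S(2) w0 w_def by force
    have XS: "XX S \<in> Lns \<union> Cub" unfolding Lns_def Cub_def using S(1) by blast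
    show "\<exists>!X. X \<in> Lns \<union> Cub \<and> P \<in> X"
    proof (rule ex1I[of _ "XX S"])
      show "XX S \<in> Lns \<union> Cub \<and> P \<in> XX S" using PS XS by blast
    next
      fix X assume X: "X \<in> Lns \<union> Cub \<and> P \<in> X"
      then obtain S' where S': "S' \<in> Fs" "X = XX S'" unfolding Lns_def Cub_def by blast
      have "S' = S" using XX_meet[OF sp S'(1) S(1)] X S'(2) PS by blast
      thus "X = XX S" using S' by simp
    qed
  qed
  show ?thesis unfolding has_mixed_partition_def
    using L1 L2 L3 L4 L5 L6 by blast
qed

end
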